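(* Let $d\ge 2$ and $F\in(0,1)$, and let $\rho_{\mathrm{dp}}(F)=F|\mathrm{GHZ}_d\rangle\langle\mathrm{GHZ}_d|+\frac{1-F}{2^d-1}\big(I-|\mathrm{GHZ}_d\rangle\langle\mathrm{GHZ}_d|\big)$ be the $d$-qubit depolarized GHZ state, where $|\mathrm{GHZ}_d\rangle=(|0\cdots0\rangle+|1\cdots1\rangle)/\sqrt2$. Let $C(F)=\sum_s\frac{4\lambda^+_s\lambda^-_s}{\lambda^+_s+\lambda^-_s}$ be computed from the eigenvalues $\lambda^\pm_s$ of $\rho_{\mathrm{dp}}(F)$ on the GHZ basis states $|G^\pm_s\rangle$, and let $\eta(F)=d(1-C(F))$. Define $$F_{\mathrm{th,dp}}=2^{-d}+\frac{(2^d-1)\left(2^d-2+\sqrt{(2^d-2)^2+2^{d+3}d}\right)}{2^{2d+1}d}.$$ Then $\eta(F)>1$ if and only if $F>F_{\mathrm{th,dp}}$.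
   Context: GHZ basis on $d$ qubits: for a bit string $s\in\{0,1\}^d$ with complement $\bar s$, and one representative $s$ chosen from each pair $\{s,\bar s\}$, set $|G^\pm_s\rangle=(|s\rangle\pm|\bar s\rangle)/\sqrt2$; these $2^d$ states form an orthonormal basis and $\rho_{\mathrm{dp}}(F)$ is diagonal in it, with eigenvalue $\lambda^\pm_s$ on $|G^\pm_s\rangle$; the sum defining $C$ runs over the $2^{d-1}$ representatives. Interpretation: $\eta(F)$ is the ratio of the quantum Fisher information $d(1-C)$ for estimating $\theta_1=\frac{1}{\sqrt d}\sum_{i}x_i$ (with the phases $x_i$ encoded by $U(x)=\exp[-\frac{i}{2}\sum_i x_i\sigma_z^{(i)}]$) to the value $1$ achieved by the optimal local strategy, so $\eta>1$ means quantum advantage. *)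

theory Defs
  imports Complex_Main
begin

text \<open>Computational basis of d qubits: bit strings = bool lists of length d.
  States/operators are real-valued functions on bit strings (all amplitudes here are real).\<close>

definition bitstrings :: "nat \<Rightarrow> bool list set" where
  "bitstrings d = {s. length s = d}"

definition comp :: "bool list \<Rightarrow> bool list" where
  "comp s = map Not s"

definition ket :: "bool list \<Rightarrow> bool list \<Rightarrow> real" where
  "ket s = (\<lambda>t. if t = s then 1 else 0)"

definition ghz :: "nat \<Rightarrow> bool list \<Rightarrow> real" where
  "ghz d = (\<lambda>t. (ket (replicate d False) t + ket (replicate d True) t) / sqrt 2)"

definition proj :: "(bool list \<Rightarrow> real) \<Rightarrow> bool list \<Rightarrow> bool list \<Rightarrow> real" where
  "proj v = (\<lambda>a b. v a * v b)"

definition ident :: "bool list \<Rightarrow> bool list \<Rightarrow> real" where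
  "ident = (\<lambda>a b. if a = b then 1 else 0)"

definition rho_dp :: "nat \<Rightarrow> real \<Rightarrow> bool list \<Rightarrow> bool list \<Rightarrow> real" where
  "rho_dp d F = (\<lambda>a b. F * proj (ghz d) a b
      + (1 - F) / (2 ^ d - 1) * (ident a b - proj (ghz d) a b))"

definition apply_op :: "nat \<Rightarrow> (bool list \<Rightarrow> bool list \<Rightarrow> real) \<Rightarrow> (bool list \<Rightarrow> real) \<Rightarrow> bool list \<Rightarrow> real" where
  "apply_op d M v = (\<lambda>a. \<Sum>b\<in>bitstrings d. M a b * v b)"

definition G_plus :: "bool list \<Rightarrow> bool list \<Rightarrow> real" where
  "G_plus s = (\<lambda>t. (ket s t + ket (comp s) t) / sqrt 2)"

definition G_minus :: "bool list \<Rightarrow> bool list \<Rightarrow> real" where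
  "G_minus s = (\<lambda>t. (ket s t - ket (comp s) t) / sqrt 2)"

definition eigval_on :: "nat \<Rightarrow> (bool list \<Rightarrow> bool list \<Rightarrow> real) \<Rightarrow> (bool list \<Rightarrow> real) \<Rightarrow> real" where
  "eigval_on d M v = (THE l. \<forall>a\<in>bitstrings d. apply_op d M v a = l * v a)"

definition lam_plus :: "nat \<Rightarrow> real \<Rightarrow> bool list \<Rightarrow> real" where
  "lam_plus d F s = eigval_on d (rho_dp d F) (G_plus s)"

definition lam_minus :: "nat \<Rightarrow> real \<Rightarrow> bool list \<Rightarrow> real" where
  "lam_minus d F s = eigval_on d (rho_dp d F) (G_minus s)"

text \<open>Representatives of the pairs {s, comp s}: the strings whose first bit is 0.\<close>
definition reps :: "nat \<Rightarrow> bool list set" where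
  "reps d = {s \<in> bitstrings d. hd s = False}"

definition C_dp :: "nat \<Rightarrow> real \<Rightarrow> real" where
  "C_dp d F = (\<Sum>s\<in>reps d. 4 * lam_plus d F s * lam_minus d F s
                               / (lam_plus d F s + lam_minus d F s))"

definition eta_dp :: "nat \<Rightarrow> real \<Rightarrow> real" where
  "eta_dp d F = real d * (1 - C_dp d F)"

definition F_th_dp :: "nat \<Rightarrow> real" where
  "F_th_dp d = 1 / 2 ^ d
     + (2 ^ d - 1) * (2 ^ d - 2 + sqrt ((2 ^ d - 2)\<^sup>2 + 2 ^ (d + 3) * real d))
       / (2 ^ (2 * d + 1) * real d)"

end

theory Submission
  imports Defs
begin

lemma bs_eq: "bitstrings d = {xs. set xs \<subseteq> (UNIV::bool set) \<and> length xs = d}"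
  by (auto simp: bitstrings_def)

lemma fin_bs: "finite (bitstrings d)"
  unfolding bs_eq by (rule finite_lists_length_eq) simp

lemma card_bs: "card (bitstrings d) = 2 ^ d"
  using card_lists_length_eq[of "UNIV::bool set" d] by (simp add: bitstrings_def)

lemma sum_ket: "x \<in> bitstrings d \<Longrightarrow> (\<Sum>b\<in>bitstrings d. f b * ket x b) = f x"
  unfolding ket_def using fin_bs[of d]
  by (simp add: if_distrib cong: if_cong)

lemma sum_ident: assumes "a \<in> bitstrings d" shows "(\<Sum>b\<in>bitstrings d. ident a b * v b) = v a"
proof -
  have "(\<Sum>b\<in>bitstrings d. ident a b * v b) = (\<Sum>b\<in>bitstrings d. if a = b then v b else 0)"
    by (rule sum.cong) (auto simp: ident_def)
  then show ?thesis using fin_bs[of d] assms by (simp add: sum.delta)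
qed

lemma apply_rho:
  assumes "a \<in> bitstrings d"
  shows "apply_op d (rho_dp d F) v a = (1 - F) / (2 ^ d - 1) * v a
     + (F - (1 - F) / (2 ^ d - 1)) * ghz d a * (\<Sum>b\<in>bitstrings d. ghz d b * v b)"
proof -
  define q where "q = (1 - F) / (2 ^ d - 1 :: real)"
  have "apply_op d (rho_dp d F) v a = (\<Sum>b\<in>bitstrings d. q * (ident a b * v b)
      + ((F - q) * ghz d a) * (ghz d b * v b))"
    unfolding apply_op_def rho_dp_def proj_def q_def[symmetric]
    by (rule sum.cong) (auto simp: algebra_simps)
  also have "\<dots> = q * v a + (F - q) * ghz d a * (\<Sum>b\<in>bitstrings d. ghz d b * v b)"
    by (simp add: sum.distrib sum_distrib_left[symmetric] sum_ident[OF assms])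
  finally show ?thesis unfolding q_def .
qed

lemma comp_bs: "s \<in> bitstrings d \<Longrightarrow> comp s \<in> bitstrings d"
  by (simp add: bitstrings_def comp_def)

lemma comp_comp[simp]: "comp (comp s) = s"
  by (simp add: comp_def o_def)

lemma comp_neq: "s \<noteq> [] \<Longrightarrow> comp s \<noteq> s"
  by (cases s) (auto simp: comp_def)

lemma ip_ket:
  assumes "x \<in> bitstrings d" "y \<in> bitstrings d"
  shows "(\<Sum>b\<in>bitstrings d. ket x b * ket y b) = (if x = y then 1 else 0)"
  using sum_ket[OF assms(2), of "ket x"] by (simp add: ket_def)

lemma ip4:
  assumes "x \<in> bitstrings d" "y \<in> bitstrings d" "u \<in> bitstrings d" "w \<in> bitstrings d"
  shows "(\<Sum>b\<in>bitstrings d. ((ket x b + ket y b) / sqrt 2) * ((ket u b + c * ket w b) / sqrt 2))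
    = ((if x = u then 1 else 0) + c * (if x = w then 1 else 0)
       + (if y = u then 1 else 0) + c * (if y = w then 1 else 0)) / 2"
proof -
  have "(\<Sum>b\<in>bitstrings d. ((ket x b + ket y b) / sqrt 2) * ((ket u b + c * ket w b) / sqrt 2))
    = (\<Sum>b\<in>bitstrings d. (ket x b * ket u b + c * (ket x b * ket w b)
        + ket y b * ket u b + c * (ket y b * ket w b)) / 2)"
    by (rule sum.cong) (auto simp: algebra_simps)
  also have "\<dots> = ((\<Sum>b\<in>bitstrings d. ket x b * ket u b) + c * (\<Sum>b\<in>bitstrings d. ket x b * ket w b)
        + (\<Sum>b\<in>bitstrings d. ket y b * ket u b) + c * (\<Sum>b\<in>bitstrings d. ket y b * ket w b)) / 2"
    by (simp add: sum_divide_distrib[symmetric] sum.distrib sum_distrib_left)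
  finally show ?thesis using assms by (simp add: ip_ket)
qed

lemma eig_lemma:
  assumes "s \<in> bitstrings d" "v s \<noteq> 0" "\<forall>a\<in>bitstrings d. apply_op d M v a = l * v a"
  shows "eigval_on d M v = l"
  unfolding eigval_on_def
proof (rule the_equality)
  show "\<forall>a\<in>bitstrings d. apply_op d M v a = l * v a" by fact
  fix l' assume "\<forall>a\<in>bitstrings d. apply_op d M v a = l' * v a"
  then have "l' * v s = l * v s" using assms by auto
  then show "l' = l" using assms(2) by simp
qed

lemma alg:
  fixes N dd F q C :: real
  assumes N: "N \<ge> dd + 2" and dd: "dd \<ge> 2" and F: "0 < F" "F < 1"
    and q: "q = (1 - F) / (N - 1)" and C: "C = 4 * F * q / (F + q) + (N - 2) * q"
  shows "dd * (1 - C) > 1 \<longleftrightarrow> F > 1 / N + (N - 1) * (N - 2 + sqrt ((N - 2)\<^sup>2 + 8 * N * dd)) / (2 * N\<^sup>2 * dd)"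
proof -
  define P where "P = dd * N\<^sup>2 * F\<^sup>2 - (2 * dd * N + (N - 1) * (N - 2)) * F - (N - 1 - dd)"
  define D where "D = (1 + (N - 2) * F) * (N - 1)"
  have N1: "N - 1 > 0" using N dd by simp
  have Dpos: "D > 0" unfolding D_def using N dd F by (intro mult_pos_pos) (auto intro: add_pos_nonneg)
  have Fq: "F + q = (1 + (N - 2) * F) / (N - 1)" unfolding q using N1 by (simp add: field_simps)
  have Fqpos: "1 + (N - 2) * F > 0" using N dd F by (auto intro: add_pos_nonneg)
  have Ceq: "C = 4 * F * (1 - F) / (1 + (N - 2) * F) + (N - 2) * (1 - F) / (N - 1)"
  proof -
    have a: "4 * F * q / (F + q) = 4 * F * (1 - F) / (1 + (N - 2) * F)"
      unfolding Fq q using N1 Fqpos by (simp add: divide_simps) (auto simp: algebra_simps)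
    show ?thesis unfolding C a by (simp add: q)
  qed
  have "(dd * (1 - C) - 1) * D = P"
  proof -
    define X where "X = 1 + (N - 2) * F"
    define Y where "Y = N - 1"
    have X0: "X \<noteq> 0" and Y0: "Y \<noteq> 0" using Fqpos N1 by (auto simp: X_def Y_def)
    have CXY: "C * (X * Y) = 4 * F * (1 - F) * Y + (N - 2) * (1 - F) * X"
      unfolding Ceq X_def[symmetric] Y_def[symmetric] using X0 Y0 by (simp add: field_simps)
    have "(dd * (1 - C) - 1) * D = dd * (X * Y) - dd * (C * (X * Y)) - X * Y"
      unfolding D_def X_def[symmetric] Y_def[symmetric] by (simp add: algebra_simps)
    also have "\<dots> = P" unfolding CXY unfolding X_def Y_def P_def by (simp add: algebra_simps power2_eq_square)
    finally show ?thesis .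
  qed
  then have e1: "dd * (1 - C) > 1 \<longleftrightarrow> P > 0" using Dpos
    by (metis diff_gt_0_iff_gt mult_pos_pos zero_less_mult_pos2)
  define R where "R = (N - 2)\<^sup>2 + 8 * N * dd"
  define B where "B = 2 * dd * N + (N - 1) * (N - 2)"
  define S where "S = (N - 1) * sqrt R"
  have Rpos: "R \<ge> 0" unfolding R_def using N dd by simp
  have S2: "S\<^sup>2 = B\<^sup>2 + 4 * dd * N\<^sup>2 * (N - 1 - dd)"
    unfolding S_def B_def power_mult_distrib using Rpos by (simp add: R_def power2_eq_square algebra_simps)
  have Spos: "S \<ge> 0" unfolding S_def using N1 Rpos by simp
  have Bpos: "B \<ge> 0" unfolding B_def using N dd by simp
  have "B\<^sup>2 < S\<^sup>2" using S2 N dd by (simp add: mult_pos_pos)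
  then have BS: "B < S" using Spos Bpos by (simp add: power_less_imp_less_base)
  have dN: "dd * N\<^sup>2 > 0" using N dd by simp
  define r where "r = (B + S) / (2 * dd * N\<^sup>2)"
  define r' where "r' = (B - S) / (2 * dd * N\<^sup>2)"
  have r'neg: "r' < 0" unfolding r'_def using BS dN by (simp add: divide_neg_pos)
  have Pfac: "P = dd * N\<^sup>2 * (F - r) * (F - r')"
  proof -
    define K where "K = dd * N\<^sup>2"
    have K0: "K \<noteq> 0" using dN by (auto simp: K_def)
    have rr: "r = (B + S) / (2 * K)" "r' = (B - S) / (2 * K)" unfolding r_def r'_def K_def by (simp_all add: mult.assoc)
    have "K * (F - r) * (F - r') = K * F\<^sup>2 - B * F + (B\<^sup>2 - S\<^sup>2) / (4 * K)"
      unfolding rr using K0 by (simp add: field_simps power2_eq_square)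
    also have "(B\<^sup>2 - S\<^sup>2) / (4 * K) = - (N - 1 - dd)"
    proof -
      have "B\<^sup>2 - S\<^sup>2 = (4 * K) * (- (N - 1 - dd))" unfolding S2 K_def by (simp add: algebra_simps)
      then show ?thesis using K0 by simp
    qed
    also have "K * F\<^sup>2 - B * F + - (N - 1 - dd) = P" unfolding P_def B_def K_def by simp
    finally show ?thesis by (simp add: K_def)
  qed
  have e2: "P > 0 \<longleftrightarrow> F > r"
  proof -
    have "F - r' > 0" using r'neg F by simp
    then show ?thesis unfolding Pfac using dN
      by (simp add: zero_less_mult_iff mult.assoc)
  qed
  have req: "r = 1 / N + (N - 1) * (N - 2 + sqrt ((N - 2)\<^sup>2 + 8 * N * dd)) / (2 * N\<^sup>2 * dd)"
    unfolding r_def B_def S_def R_def using dN N dd by (simp add: field_simps power2_eq_square)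
  show ?thesis using e1 e2 req by simp
qed


lemma ghz_G: "ghz d = G_plus (replicate d False)"
  by (rule ext) (simp add: ghz_def G_plus_def comp_def)

lemma Gm_alt: "G_minus s = (\<lambda>t. (ket s t + (-1) * ket (comp s) t) / sqrt 2)"
  by (simp add: G_minus_def)

lemma reps_facts:
  assumes "d \<ge> 1" "s \<in> reps d"
  shows "s \<in> bitstrings d" "s \<noteq> comp (replicate d False)" "comp s \<noteq> replicate d False"
    "s \<noteq> comp s"
proof -
  show "s \<in> bitstrings d" using assms by (simp add: reps_def)
  have ne: "s \<noteq> []" using assms by (auto simp: reps_def bitstrings_def)
  show "s \<noteq> comp s" using comp_neq[OF ne] by metis
  obtain x xs where s: "s = x # xs" using ne by (cases s) auto
  obtain e where d: "d = Suc e" using assms(1) by (cases d) auto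
  show "s \<noteq> comp (replicate d False)" using assms s d by (auto simp: reps_def comp_def)
  show "comp s \<noteq> replicate d False" using assms s d by (auto simp: reps_def comp_def)
qed

lemma z_reps: "d \<ge> 1 \<Longrightarrow> replicate d False \<in> reps d"
  by (cases d) (auto simp: reps_def bitstrings_def)

lemma z_neq: "d \<ge> 1 \<Longrightarrow> comp (replicate d False) \<noteq> replicate d False"
  by (rule comp_neq) auto

lemma card_reps: "d \<ge> 1 \<Longrightarrow> card (reps d) = 2 ^ (d - 1)"
proof -
  assume "d \<ge> 1"
  then obtain e where d: "d = Suc e" by (cases d) auto
  have "reps d = (#) False ` bitstrings e"
  proof
    show "reps d \<subseteq> (#) False ` bitstrings e"
    proof
      fix s assume "s \<in> reps d"
      then obtain x xs where "s = x # xs" "length xs = e" "x = False"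
        using d by (cases s) (auto simp: reps_def bitstrings_def)
      then show "s \<in> (#) False ` bitstrings e" by (auto simp: bitstrings_def)
    qed
    show "(#) False ` bitstrings e \<subseteq> reps d" using d by (auto simp: reps_def bitstrings_def)
  qed
  then show ?thesis using card_bs[of e] d by (simp add: card_image)
qed

lemma lams:
  assumes d: "d \<ge> 1" and s: "s \<in> reps d"
  shows "lam_plus d F s = (if s = replicate d False then F else (1 - F) / (2 ^ d - 1))"
    "lam_minus d F s = (1 - F) / (2 ^ d - 1)"
proof -
  define z where "z = replicate d False"
  define q where "q = (1 - F) / (2 ^ d - 1 :: real)"
  note rf = reps_facts[OF d s, folded z_def]
  have zb: "z \<in> bitstrings d" "comp z \<in> bitstrings d" using z_reps[OF d] comp_bs
    by (auto simp: z_def reps_def)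
  have csb: "comp s \<in> bitstrings d" using comp_bs rf by auto
  have zn: "comp z \<noteq> z" using z_neq[OF d] by (simp add: z_def)
  have czs: "comp z = comp s \<longleftrightarrow> z = s" by (metis comp_comp)
  have zcs: "z \<noteq> comp s" using rf by (metis comp_comp)
  have ipp: "(\<Sum>b\<in>bitstrings d. ghz d b * G_plus s b) = (if s = z then 1 else 0)"
    unfolding ghz_G z_def[symmetric] G_plus_def
    using ip4[OF zb rf(1) csb, of 1] rf zn czs zcs by auto
  have ipm: "(\<Sum>b\<in>bitstrings d. ghz d b * G_minus s b) = 0"
    unfolding ghz_G z_def[symmetric] G_plus_def Gm_alt
    using ip4[OF zb rf(1) csb, of "-1"] rf zn czs zcs by auto
  have vp: "G_plus s s \<noteq> 0" "G_minus s s \<noteq> 0" using rf(4)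
    by (auto simp: G_plus_def G_minus_def ket_def)
  show "lam_plus d F s = (if s = replicate d False then F else (1 - F) / (2 ^ d - 1))"
    unfolding lam_plus_def z_def[symmetric] q_def[symmetric]
  proof (rule eig_lemma[where v="G_plus s", OF rf(1) vp(1)], intro ballI)
    fix a assume a: "a \<in> bitstrings d"
    show "apply_op d (rho_dp d F) (G_plus s) a = (if s = z then F else q) * G_plus s a"
      unfolding apply_rho[OF a] ipp q_def[symmetric]
      by (cases "s = z") (auto simp: ghz_G z_def[symmetric] algebra_simps)
  qed
  show "lam_minus d F s = (1 - F) / (2 ^ d - 1)"
    unfolding lam_minus_def q_def[symmetric]
  proof (rule eig_lemma[where v="G_minus s", OF rf(1) vp(2)], intro ballI)
    fix a assume a: "a \<in> bitstrings d"
    show "apply_op d (rho_dp d F) (G_minus s) a = q * G_minus s a"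
      unfolding apply_rho[OF a] ipm q_def[symmetric] by simp
  qed
qed

lemma C_val:
  assumes d: "d \<ge> 1" and F: "F < 1"
  shows "C_dp d F = 4 * F * ((1 - F) / (2 ^ d - 1)) / (F + (1 - F) / (2 ^ d - 1))
     + (2 ^ d - 2) * ((1 - F) / (2 ^ d - 1))"
proof -
  define z where "z = replicate d False"
  define q where "q = (1 - F) / (2 ^ d - 1 :: real)"
  have N: "(2::real) ^ d \<ge> 2" using d
    using power_increasing[of 1 d "2::real"] by simp
  have qpos: "q > 0" unfolding q_def using N F by simp
  have fin: "finite (reps d)" using fin_bs[of d] by (rule rev_finite_subset) (auto simp: reps_def)
  have zr: "z \<in> reps d" using z_reps[OF d] by (simp add: z_def)
  let ?f = "\<lambda>s. 4 * lam_plus d F s * lam_minus d F s / (lam_plus d F s + lam_minus d F s)"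
  have "C_dp d F = ?f z + sum ?f (reps d - {z})"
    unfolding C_dp_def using sum.remove[OF fin zr] by simp
  also have "?f z = 4 * F * q / (F + q)" using lams[OF d zr] by (simp add: z_def q_def)
  also have "sum ?f (reps d - {z}) = sum (\<lambda>s. 2 * q) (reps d - {z})"
  proof (rule sum.cong)
    fix s assume "s \<in> reps d - {z}"
    then have "lam_plus d F s = q" "lam_minus d F s = q" using lams[OF d, of s F]
      by (auto simp: z_def q_def)
    then show "?f s = 2 * q" using qpos by (simp add: power2_eq_square)
  qed simp
  also have "\<dots> = (2 ^ d - 2) * q"
  proof -
    have "card (reps d - {z}) = 2 ^ (d - 1) - 1" using card_reps[OF d] zr fin by simp
    then have "real (card (reps d - {z})) = 2 ^ (d - 1) - 1"
      using d by (simp add: of_nat_diff)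
    moreover have "(2::real) ^ d = 2 * 2 ^ (d - 1)" using d by (metis Suc_diff_1 less_le_trans zero_less_one power_Suc)
    ultimately have "(2::real) ^ d - 2 = 2 * real (card (reps d - {z}))" by simp
    then show ?thesis by simp
  qed
  finally show ?thesis by (simp add: q_def)
qed

lemma pow_ge: "d \<ge> 2 \<Longrightarrow> d + 2 \<le> (2::nat) ^ d"
proof (induction d rule: dec_induct)
  case base then show ?case by simp
next
  case (step n) then show ?case by simp
qed

theorem mainTheorem2:
  fixes d :: nat and F :: real
  assumes "d \<ge> 2" and "0 < F" and "F < 1"
  shows "eta_dp d F > 1 \<longleftrightarrow> F > F_th_dp d"
proof -
  define N :: real where "N = 2 ^ d"
  have Nge: "N \<ge> real d + 2" unfolding N_def using pow_ge[OF assms(1)]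
    by (metis of_nat_add of_nat_le_iff of_nat_numeral of_nat_power)
  have C: "C_dp d F = 4 * F * ((1 - F) / (N - 1)) / (F + (1 - F) / (N - 1)) + (N - 2) * ((1 - F) / (N - 1))"
    using C_val[of d F] assms unfolding N_def by simp
  have Fth: "F_th_dp d = 1 / N + (N - 1) * (N - 2 + sqrt ((N - 2)\<^sup>2 + 8 * N * real d)) / (2 * N\<^sup>2 * real d)"
    unfolding F_th_dp_def N_def by (simp add: power_add power_mult power2_eq_square mult.commute)
  show ?thesis unfolding eta_dp_def Fth
    by (rule alg[OF Nge _ assms(2,3) refl C]) (use assms in simp)
qed

end
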